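(* Every point of $\Delta$ with both coordinates rational belongs to $\bigcup_{n\ge0}\bigcup_{k_1,\dots,k_n\in\mathbb N}H_{k_1}\circ\cdots\circ H_{k_n}(\partial\Delta)$ (where the term $n=0$ is $\partial\Delta$ itself).
   Context: $\Delta=\{(u,v)\in\mathbb R^2:u\ge0,v\ge0,u+v\le1\}$, with boundary $\partial\Delta$. For $k\in\mathbb N$, $H_k:\Delta\to\Delta$ is $H_k(u,v)=\frac{1}{k(1-v)+1-u}(v,1-v)$. *)

theory Defs
  imports "HOL-Analysis.Analysis"
begin

definition Delta :: "(real \<times> real) set" where
  "Delta = {(u, v). u \<ge> 0 \<and> v \<ge> 0 \<and> u + v \<le> 1}"

definition H :: "nat \<Rightarrow> real \<times> real \<Rightarrow> real \<times> real" where
  "H k p = (let u = fst p; v = snd p; d = real k * (1 - v) + 1 - u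
            in (v / d, (1 - v) / d))"

definition Hcomp :: "nat list \<Rightarrow> real \<times> real \<Rightarrow> real \<times> real" where
  "Hcomp ks = foldr (\<lambda>k f. H k \<circ> f) ks id"

end

theory Submission
  imports Defs
begin

lemma Hcomp_Cons: "Hcomp (k # ks) = H k \<circ> Hcomp ks"
  by (simp add: Hcomp_def)

lemma bdry:
  assumes "(x, y) \<in> Delta" and "x = 0 \<or> y = 0 \<or> x + y = 1"
  shows "(x, y) \<in> frontier Delta"
proof -
  have c: "(x, y) \<in> closure Delta" using assms(1) closure_subset by blast
  have D1: "Delta \<subseteq> {p. (1::real, 0::real) \<bullet> p \<ge> 0}" by (auto simp: Delta_def)
  have D2: "Delta \<subseteq> {p. (0::real, 1::real) \<bullet> p \<ge> 0}" by (auto simp: Delta_def)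
  have D3: "Delta \<subseteq> {p. (-1::real, -1::real) \<bullet> p \<ge> -1}" by (auto simp: Delta_def)
  have I1: "interior Delta \<subseteq> {p. (1::real, 0::real) \<bullet> p > 0}"
    using interior_mono[OF D1] interior_halfspace_ge[of "(1::real, 0::real)" 0] by (simp add: zero_prod_def)
  have I2: "interior Delta \<subseteq> {p. (0::real, 1::real) \<bullet> p > 0}"
    using interior_mono[OF D2] interior_halfspace_ge[of "(0::real, 1::real)" 0] by (simp add: zero_prod_def)
  have I3: "interior Delta \<subseteq> {p. (-1::real, -1::real) \<bullet> p > -1}"
    using interior_mono[OF D3] interior_halfspace_ge[of "(-1::real, -1::real)" "-1"] by (simp add: zero_prod_def)
  have "(x, y) \<notin> interior Delta"
    using I1 I2 I3 assms(2) by auto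
  then show ?thesis using c by (simp add: frontier_def)
qed

lemma main:
  fixes q :: nat
  shows "\<forall>x y a b. (x, y) \<in> Delta \<longrightarrow> q > 0 \<longrightarrow> x * real q = of_int a \<longrightarrow> y * real q = of_int b
     \<longrightarrow> (\<exists>ks. (\<forall>k\<in>set ks. k \<ge> 1) \<and> (x, y) \<in> Hcomp ks ` frontier Delta)"
proof (induction q rule: less_induct)
  case (less q)
  show ?case
  proof (intro allI impI)
    fix x y :: real and a b :: int
    assume D: "(x, y) \<in> Delta" and q0: "q > 0" and ha: "x * real q = of_int a" and hb: "y * real q = of_int b"
    show "\<exists>ks. (\<forall>k\<in>set ks. k \<ge> 1) \<and> (x, y) \<in> Hcomp ks ` frontier Delta"
    proof (cases "x = 0 \<or> y = 0 \<or> x + y = 1")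
      case True
      then have "(x, y) \<in> frontier Delta" using bdry D by blast
      then have "(x, y) \<in> Hcomp [] ` frontier Delta" by (simp add: Hcomp_def)
      then show ?thesis by (intro exI[of _ "[]"]) simp
    next
      case False
      then have x0: "x > 0" and y0: "y > 0" and xy: "x + y < 1" using D by (auto simp: Delta_def)
      define k where "k = nat \<lceil>(1 - x - y) / y\<rceil>"
      have kpos: "(1 - x - y) / y > 0" using x0 y0 xy by simp
      have kreal: "real k = of_int \<lceil>(1 - x - y) / y\<rceil>" unfolding k_def using kpos by simp
      have k1: "(1 - x - y) / y \<le> real k" and k2: "real k < (1 - x - y) / y + 1"
        using kreal by linarith+
      have kge: "k \<ge> 1" using kpos k1 kreal by linarith
      have ky1: "real k * y \<ge> 1 - x - y" using k1 y0 by (simp add: field_simps)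
      have ky2: "real k * y < 1 - x" using k2 y0 by (simp add: field_simps)
      define u where "u = (real k * y + x + y - 1) / (x + y)"
      define v where "v = x / (x + y)"
      have sp: "x + y > 0" using x0 y0 by simp
      have Duv: "(u, v) \<in> Delta"
      proof -
        have "u \<ge> 0" unfolding u_def using ky1 sp by simp
        moreover have "v \<ge> 0" unfolding v_def using x0 sp by simp
        moreover have "u + v \<le> 1" unfolding u_def v_def using ky2 sp
          by (simp add: divide_simps)
        ultimately show ?thesis by (simp add: Delta_def)
      qed
      have Huv: "H k (u, v) = (x, y)"
      proof -
        have d: "real k * (1 - v) + 1 - u = 1 / (x + y)"
          unfolding u_def v_def using sp by (simp add: field_simps)
        show ?thesis unfolding H_def Let_def using d sp
          by (simp add: v_def field_simps)
      qed
      define q' where "q' = nat (a + b)"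
      have ab: "real_of_int (a + b) = (x + y) * real q" using ha hb by (simp add: algebra_simps)
      have abpos: "a + b > 0" using ab sp q0
        by (metis of_int_0_less_iff mult_pos_pos of_nat_0_less_iff)
      have q'r: "real q' = (x + y) * real q" unfolding q'_def using ab abpos by simp
      have q'lt: "q' < q"
      proof -
        have "(x + y) * real q < real q" using xy q0 by simp
        then show ?thesis using q'r by linarith
      qed
      have q'0: "q' > 0" using abpos q'_def by simp
      have hu: "u * real q' = of_int (int k * b + a + b - int q)"
        unfolding u_def q'r using sp
        by (simp add: field_simps flip: ha hb)
      have hv: "v * real q' = of_int a"
        unfolding v_def q'r using sp by (simp add: field_simps flip: ha)
      obtain ks where ks: "\<forall>k\<in>set ks. k \<ge> 1" "(u, v) \<in> Hcomp ks ` frontier Delta"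
        using less.IH[OF q'lt] Duv q'0 hu hv by blast
      then obtain p where p: "p \<in> frontier Delta" "Hcomp ks p = (u, v)" by auto
      have "Hcomp (k # ks) p = (x, y)" using p Huv by (simp add: Hcomp_Cons)
      then have "(x, y) \<in> Hcomp (k # ks) ` frontier Delta" using p(1) by (metis image_eqI)
      then show ?thesis using ks(1) kge by (intro exI[of _ "k # ks"]) auto
    qed
  qed
qed

theorem proposition3p9:
  fixes u v :: real
  assumes "(u, v) \<in> Delta" and "u \<in> \<rat>" and "v \<in> \<rat>"
  shows "\<exists>ks. (\<forall>k\<in>set ks. k \<ge> 1) \<and> (u, v) \<in> Hcomp ks ` frontier Delta"
proof -
  obtain a m where am: "u = of_int a / of_int m" "m > 0" using assms(2) Rats_cases' by metis
  obtain b n where bn: "v = of_int b / of_int n" "n > 0" using assms(3) Rats_cases' by metis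
  define q where "q = nat (m * n)"
  have qr: "real q = of_int m * of_int n" unfolding q_def using am(2) bn(2) by simp
  have q0: "q > 0" unfolding q_def using am(2) bn(2) by simp
  have "u * real q = of_int (a * n)" using am qr by (simp add: field_simps)
  moreover have "v * real q = of_int (b * m)" using bn qr by (simp add: field_simps)
  ultimately show ?thesis using main[of q] assms(1) q0 by blast
qed

end
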